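(* Let $P$ be a weighted combinatorial optimization problem, let $A$ be a deterministic algorithm for $P$ that uses symbolic perturbation, and let $\mathcal{C}$ be any null case of $P$. (d) If for every instance $(S,w) \notin \mathcal{C}$ the algorithm returns $A(S,w) \in L$ with $\mathrm{cost}(w,A(S,w)) = \mathrm{OPT}(S,w)$, then the same holds for every instance $(S,w)$. (e) For each $S=(n,W,L,\mathrm{cost}) \in P$, let $c(S,\cdot) : W \to \mathbb{R}$ be continuous. Suppose that for every instance $(S,w) \notin \mathcal{C}$ the algorithm returns $A(S,w) \in L$ with $\mathrm{cost}(w,A(S,w)) \le c(S,w)\cdot \mathrm{OPT}(S,w)$. Then the same holds for every instance $(S,w)$.
   Context: Let $Q$ be a subfield of $\mathbb{R}$ (e.g. $\mathbb{R}$, $\mathbb{Q}$, or the real algebraic numbers). Equip $Q^n$ with the Euclidean metric $d$. For $x \in Q^n$ and $\epsilon>0$, the $\epsilon$-neighborhood of $x$ is $\{y \in Q^n \mid d(x,y)<\epsilon\}$. A neighborhood of $x$ is an $\epsilon$-neighborhood of $x$ for some $\epsilon>0$. A set $U \subseteq Q^n$ is open if it contains a neighborhood of each of its points. A set $C \subseteq Q^n$ is nowhere open if it contains no non-empty open subset of $Q^n$. A set $X \subseteq Q^n$ is semi-open if for every $x \in X$ and every neighborhood $N$ of $x$ there is a non-empty open set $U \subseteq Q^n$ with $U \subseteq N \cap X$. For $x \in \mathbb{R}$, $\mathrm{sgn}(x) = x/|x|$ if $x \neq 0$ and $\mathrm{sgn}(0)=0$. Problems: A weighted combinatorial optimization (minimization)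 problem $P$ is a set of problem structures; each structure $S=(n,W,L,\mathrm{cost})$ consists of a positive integer $n$, a semi-open set $W \subseteq Q^n$ of admissible weight vectors, a finite non-empty set $L$ of feasible solutions, and a function $\mathrm{cost} : W \times L \to \mathbb{R}$ such that $\mathrm{cost}(\cdot,l)$ is continuous on $W$ for every $l \in L$. An instance is a pair $(S,w)$ with $S \in P$ and $w \in W$, and $\mathrm{OPT}(S,w)=\min_{l\in L}\mathrm{cost}(w,l)$. A null case of $P$ is a set $\mathcal{C}$ of instances of $P$ such that for every structure $S=(n,W,L,\mathrm{cost}) \in P$ the set $\{w \in W \mid (S,w) \in \mathcal{C}\}$ is nowhere open. Algorithms: A deterministic algorithm $A$ for $P$ assigns to each structure $S=(n,W,L,\mathrm{cost}) \in P$ a finite rooted binary decision tree $T_S$. Each leaf is labelled with an element of $L \cup \{l_f\}$, where $l_f \notin L$ is a special symbol representing failure. Each internal node $u$ is labelled with a continuous branching function $v_u : W \to Q$. On input $(S,w)$, $A$ starts at the root of $T_S$. At an internal node $u$ it moves to the left child if $v_u(w)<0$ and to the right child if $v_u(w)>0$. If $v_u(w)=0$ (a tie), it moves to the left or right child according to a deterministic tie-breaking policy, i.e. a rule fixing, for every instance $(S,w)$ and every internal node $u$ with $v_u(w)=0$, which child is taken. $A$ returns the label $A(S,w)$ of the leaf reached. Directions: Let $W \subseteq Q^n$ be semi-open, $w \in W$, and $h : \mathbb{R} \to Q^n$ with $h(0)=0$ and $h$ continuous at $0$. $W$ continues into direction $h$ at $w$ if there is $\delta>0$ such that for every $0<a<\delta$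 some neighborhood of $w+h(a)$ is contained in $W$. If $W$ continues into direction $h$ at $w$ and $f : W \to Q$ is continuous, then $f$ is increasing (resp. constant, decreasing) into direction $h$ at $w$ if the following holds: there is $\delta>0$ such that for every $0<a<\delta$ there is a neighborhood $N_a \subseteq W$ of $w+h(a)$ with $\mathrm{sgn}(f(y)-f(w)) = 1$ (resp. $0$, $-1$) for all $y \in N_a$. Symbolic perturbation: $A$ uses symbolic perturbation if, for every instance $(S,w)$ with $S=(n,W,L,\mathrm{cost})$, there exists a function $h_{S,w} : \mathbb{R} \to Q^n$ satisfying all of the following: - $h_{S,w}(0)=0$ and $h_{S,w}$ is continuous at $0$; - $W$ continues into direction $h_{S,w}$ at $w$; - every branching function of $T_S$ is decreasing, constant, or increasing into direction $h_{S,w}$ at $w$; - whenever a tie $v_u(w)=0$ occurs at an internal node $u$ on input $(S,w)$, $A$ takes the left child if $v_u$ is decreasing into direction $h_{S,w}$ at $w$, and the right child otherwise. *)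

theory Defs
  imports Complex_Main
begin

text \<open>Points of Q^n are represented as functions nat => real that take values in Q
  on the indices 0..n-1 and vanish on all other indices.\<close>

type_synonym vec = "nat \<Rightarrow> real"

definition is_subfield :: "real set \<Rightarrow> bool" where
  "is_subfield Q \<longleftrightarrow> 0 \<in> Q \<and> 1 \<in> Q \<and>
     (\<forall>x\<in>Q. \<forall>y\<in>Q. x + y \<in> Q \<and> x * y \<in> Q) \<and> (\<forall>x\<in>Q. - x \<in> Q) \<and>
     (\<forall>x\<in>Q. x \<noteq> 0 \<longrightarrow> inverse x \<in> Q)"

definition Qn :: "real set \<Rightarrow> nat \<Rightarrow> vec set" where
  "Qn Q n = {x. (\<forall>i<n. x i \<in> Q) \<and> (\<forall>i\<ge>n. x i = 0)}"

definition distn :: "nat \<Rightarrow> vec \<Rightarrow> vec \<Rightarrow> real" where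
  "distn n x y = sqrt (\<Sum>i<n. (x i - y i)^2)"

definition nbhd :: "real set \<Rightarrow> nat \<Rightarrow> vec \<Rightarrow> real \<Rightarrow> vec set" where
  "nbhd Q n x e = {y \<in> Qn Q n. distn n x y < e}"

definition openQ :: "real set \<Rightarrow> nat \<Rightarrow> vec set \<Rightarrow> bool" where
  "openQ Q n U \<longleftrightarrow> U \<subseteq> Qn Q n \<and> (\<forall>x\<in>U. \<exists>e>0. nbhd Q n x e \<subseteq> U)"

definition nowhere_open :: "real set \<Rightarrow> nat \<Rightarrow> vec set \<Rightarrow> bool" where
  "nowhere_open Q n C \<longleftrightarrow> \<not> (\<exists>U. U \<noteq> {} \<and> openQ Q n U \<and> U \<subseteq> C)"

definition semi_open :: "real set \<Rightarrow> nat \<Rightarrow> vec set \<Rightarrow> bool" where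
  "semi_open Q n X \<longleftrightarrow> X \<subseteq> Qn Q n \<and>
     (\<forall>x\<in>X. \<forall>e>0. \<exists>U. U \<noteq> {} \<and> openQ Q n U \<and> U \<subseteq> nbhd Q n x e \<inter> X)"

definition contQ :: "nat \<Rightarrow> vec set \<Rightarrow> (vec \<Rightarrow> real) \<Rightarrow> bool" where
  "contQ n W f \<longleftrightarrow> (\<forall>x\<in>W. \<forall>e>0. \<exists>d>0. \<forall>y\<in>W. distn n x y < d \<longrightarrow> \<bar>f y - f x\<bar> < e)"

text \<open>Problem structures S = (n, W, L, cost); the failure symbol is None.\<close>
type_synonym 'l struct = "nat \<times> vec set \<times> 'l set \<times> (vec \<Rightarrow> 'l \<Rightarrow> real)"

definition valid_struct :: "real set \<Rightarrow> 'l struct \<Rightarrow> bool" where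
  "valid_struct Q S = (case S of (n, W, L, cost) \<Rightarrow>
     n > 0 \<and> semi_open Q n W \<and> finite L \<and> L \<noteq> {} \<and> (\<forall>l\<in>L. contQ n W (\<lambda>w. cost w l)))"

definition is_problem :: "real set \<Rightarrow> 'l struct set \<Rightarrow> bool" where
  "is_problem Q P \<longleftrightarrow> (\<forall>S\<in>P. valid_struct Q S)"

definition OPT :: "'l struct \<Rightarrow> vec \<Rightarrow> real" where
  "OPT S w = (case S of (n, W, L, cost) \<Rightarrow> Min ((\<lambda>l. cost w l) ` L))"

definition null_case :: "real set \<Rightarrow> 'l struct set \<Rightarrow> ('l struct \<times> vec) set \<Rightarrow> bool" where
  "null_case Q P C \<longleftrightarrow>
     (\<forall>(S, w)\<in>C. S \<in> P \<and> w \<in> fst (snd S)) \<and>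
     (\<forall>S\<in>P. case S of (n, W, L, cost) \<Rightarrow> nowhere_open Q n {w \<in> W. (S, w) \<in> C})"

datatype 'l dtree = Leaf "'l option" | Node "vec \<Rightarrow> real" "'l dtree" "'l dtree"

fun branch_fns :: "'l dtree \<Rightarrow> (vec \<Rightarrow> real) set" where
  "branch_fns (Leaf x) = {}"
| "branch_fns (Node v l r) = insert v (branch_fns l \<union> branch_fns r)"

fun leaf_labels :: "'l dtree \<Rightarrow> 'l set" where
  "leaf_labels (Leaf x) = set_option x"
| "leaf_labels (Node v l r) = leaf_labels l \<union> leaf_labels r"

text \<open>Nodes are identified by their path from the root (False = left, True = right).
  The tie-breaking policy for a fixed instance is a map tb from nodes to bool,
  True meaning "go left" when a tie occurs at that node.\<close>
fun run :: "(bool list \<Rightarrow> bool) \<Rightarrow> vec \<Rightarrow> bool list \<Rightarrow> 'l dtree \<Rightarrow> 'l option" where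
  "run tb w p (Leaf x) = x"
| "run tb w p (Node v l r) =
     (if v w < 0 then run tb w (p @ [False]) l
      else if v w > 0 then run tb w (p @ [True]) r
      else if tb p then run tb w (p @ [False]) l else run tb w (p @ [True]) r)"

fun ties_ok :: "(bool list \<Rightarrow> bool) \<Rightarrow> ((vec \<Rightarrow> real) \<Rightarrow> bool) \<Rightarrow> vec \<Rightarrow> bool list \<Rightarrow> 'l dtree \<Rightarrow> bool" where
  "ties_ok tb dec w p (Leaf x) = True"
| "ties_ok tb dec w p (Node v l r) =
     (if v w < 0 then ties_ok tb dec w (p @ [False]) l
      else if v w > 0 then ties_ok tb dec w (p @ [True]) r
      else (tb p = dec v) \<and>
           (if tb p then ties_ok tb dec w (p @ [False]) l else ties_ok tb dec w (p @ [True]) r))"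

text \<open>A deterministic algorithm: a tree T S for each structure, and a tie-breaking policy tb.\<close>
definition is_algorithm :: "real set \<Rightarrow> 'l struct set \<Rightarrow> ('l struct \<Rightarrow> 'l dtree) \<Rightarrow> bool" where
  "is_algorithm Q P T \<longleftrightarrow> (\<forall>S\<in>P. case S of (n, W, L, cost) \<Rightarrow>
      leaf_labels (T S) \<subseteq> L \<and>
      (\<forall>v\<in>branch_fns (T S). contQ n W v \<and> v ` W \<subseteq> Q))"

definition alg_out :: "('l struct \<Rightarrow> 'l dtree) \<Rightarrow> ('l struct \<Rightarrow> vec \<Rightarrow> bool list \<Rightarrow> bool)
    \<Rightarrow> 'l struct \<Rightarrow> vec \<Rightarrow> 'l option" where
  "alg_out T tb S w = run (tb S w) w [] (T S)"

definition continues_into :: "real set \<Rightarrow> nat \<Rightarrow> vec set \<Rightarrow> (real \<Rightarrow> vec) \<Rightarrow> vec \<Rightarrow> bool" where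
  "continues_into Q n W h w \<longleftrightarrow>
     (\<exists>d>0. \<forall>a. 0 < a \<and> a < d \<longrightarrow> (\<exists>e>0. nbhd Q n (\<lambda>i. w i + h a i) e \<subseteq> W))"

definition dir_behaviour :: "real set \<Rightarrow> nat \<Rightarrow> vec set \<Rightarrow> (real \<Rightarrow> vec) \<Rightarrow> vec \<Rightarrow> (vec \<Rightarrow> real) \<Rightarrow> real \<Rightarrow> bool" where
  "dir_behaviour Q n W h w f s \<longleftrightarrow>
     (\<exists>d>0. \<forall>a. 0 < a \<and> a < d \<longrightarrow>
        (\<exists>e>0. nbhd Q n (\<lambda>i. w i + h a i) e \<subseteq> W \<and> (\<forall>y\<in>nbhd Q n (\<lambda>i. w i + h a i) e. sgn (f y - f w) = s)))"

definition is_direction :: "real set \<Rightarrow> nat \<Rightarrow> (real \<Rightarrow> vec) \<Rightarrow> bool" where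
  "is_direction Q n h \<longleftrightarrow> (\<forall>a. h a \<in> Qn Q n) \<and> h 0 = (\<lambda>i. 0) \<and>
     (\<forall>e>0. \<exists>d>0. \<forall>a. \<bar>a\<bar> < d \<longrightarrow> distn n (h a) (\<lambda>i. 0) < e)"

definition uses_symbolic_perturbation :: "real set \<Rightarrow> 'l struct set \<Rightarrow> ('l struct \<Rightarrow> 'l dtree)
    \<Rightarrow> ('l struct \<Rightarrow> vec \<Rightarrow> bool list \<Rightarrow> bool) \<Rightarrow> bool" where
  "uses_symbolic_perturbation Q P T tb \<longleftrightarrow> (\<forall>S\<in>P. case S of (n, W, L, cost) \<Rightarrow>
     (\<forall>w\<in>W. \<exists>h. is_direction Q n h \<and> continues_into Q n W h w \<and>
        (\<forall>v\<in>branch_fns (T S). dir_behaviour Q n W h w v (-1) \<or> dir_behaviour Q n W h w v 0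
                                \<or> dir_behaviour Q n W h w v 1) \<and>
        ties_ok (tb S w) (\<lambda>v. dir_behaviour Q n W h w v (-1)) w [] (T S)))"

end

theory Submission
  imports Defs "HOL-Analysis.L2_Norm"
begin

lemma distn_L2: "distn n x y = L2_set (\<lambda>i. x i - y i) {..<n}"
  by (simp add: distn_def L2_set_def)

lemma distn_sym: "distn n x y = distn n y x"
  unfolding distn_def by (simp add: power2_commute)

lemma distn_self[simp]: "distn n x x = 0" by (simp add: distn_def)

lemma distn_tri: "distn n x z \<le> distn n x y + distn n y z"
proof -
  have "distn n x z = L2_set (\<lambda>i. (x i - y i) + (y i - z i)) {..<n}" by (simp add: distn_L2)
  also have "\<dots> \<le> L2_set (\<lambda>i. x i - y i) {..<n} + L2_set (\<lambda>i. y i - z i) {..<n}"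
    by (rule L2_set_triangle_ineq)
  finally show ?thesis by (simp add: distn_L2)
qed

lemma distn_shift: "distn n w (\<lambda>i. w i + h i) = distn n h (\<lambda>i. 0)"
  by (simp add: distn_def)

lemma Qn_add: assumes "is_subfield Q" "x \<in> Qn Q n" "h \<in> Qn Q n" shows "(\<lambda>i. x i + h i) \<in> Qn Q n"
  using assms by (auto simp: Qn_def is_subfield_def)

lemma nbhd_mono: "e \<le> e' \<Longrightarrow> nbhd Q n x e \<subseteq> nbhd Q n x e'"
  by (auto simp: nbhd_def)

lemma nbhd_center: "x \<in> Qn Q n \<Longrightarrow> e > 0 \<Longrightarrow> x \<in> nbhd Q n x e"
  by (simp add: nbhd_def)

lemma nbhd_inner: assumes "y \<in> nbhd Q n x e" shows "\<exists>r>0. nbhd Q n y r \<subseteq> nbhd Q n x e"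
proof -
  have r: "e - distn n x y > 0" using assms by (simp add: nbhd_def)
  have "nbhd Q n y (e - distn n x y) \<subseteq> nbhd Q n x e"
  proof
    fix z assume z: "z \<in> nbhd Q n y (e - distn n x y)"
    have "distn n x z \<le> distn n x y + distn n y z" by (rule distn_tri)
    with z show "z \<in> nbhd Q n x e" by (auto simp: nbhd_def)
  qed
  with r show ?thesis by blast
qed

lemma openQ_nbhd: "openQ Q n (nbhd Q n x e)"
  unfolding openQ_def
proof
  show "nbhd Q n x e \<subseteq> Qn Q n" by (auto simp: nbhd_def)
  show "\<forall>y\<in>nbhd Q n x e. \<exists>r>0. nbhd Q n y r \<subseteq> nbhd Q n x e" using nbhd_inner by blast
qed

lemma finite_min_delta:
  assumes "finite B" "\<forall>v\<in>B. \<exists>d>0. \<forall>x. 0 < x \<and> x < d \<longrightarrow> R v x"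
  shows "\<exists>d>(0::real). \<forall>v\<in>B. \<forall>x. 0 < x \<and> x < d \<longrightarrow> R v x"
  using assms
proof (induction B rule: finite_induct)
  case empty then show ?case by (auto intro: exI[of _ 1])
next
  case (insert v B)
  then obtain d1 where d1: "d1 > 0" "\<forall>u\<in>B. \<forall>x. 0 < x \<and> x < d1 \<longrightarrow> R u x" by auto
  from insert obtain d2 where d2: "d2 > 0" "\<forall>x. 0 < x \<and> x < d2 \<longrightarrow> R v x" by auto
  show ?case by (rule exI[of _ "min d1 d2"]) (use d1 d2 in auto)
qed

lemma dir_unique:
  assumes sf: "is_subfield Q" and w: "w \<in> Qn Q n" and hd: "is_direction Q n h"
    and b1: "dir_behaviour Q n W h w f s" and b2: "dir_behaviour Q n W h w f s'"
  shows "s = s'"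
proof -
  obtain d1 where d1: "d1>0" "\<forall>a. 0 < a \<and> a < d1 \<longrightarrow> (\<exists>e>0. nbhd Q n (\<lambda>i. w i + h a i) e \<subseteq> W \<and> (\<forall>y\<in>nbhd Q n (\<lambda>i. w i + h a i) e. sgn (f y - f w) = s))"
    using b1 unfolding dir_behaviour_def by blast
  obtain d2 where d2: "d2>0" "\<forall>a. 0 < a \<and> a < d2 \<longrightarrow> (\<exists>e>0. nbhd Q n (\<lambda>i. w i + h a i) e \<subseteq> W \<and> (\<forall>y\<in>nbhd Q n (\<lambda>i. w i + h a i) e. sgn (f y - f w) = s'))"
    using b2 unfolding dir_behaviour_def by blast
  define a where "a = min d1 d2 / 2"
  have a: "0 < a" "a < d1" "a < d2" using d1 d2 by (auto simp: a_def)
  obtain e1 where e1: "e1 > 0" "\<forall>y\<in>nbhd Q n (\<lambda>i. w i + h a i) e1. sgn (f y - f w) = s" using d1(2) a by blast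
  obtain e2 where e2: "e2 > 0" "\<forall>y\<in>nbhd Q n (\<lambda>i. w i + h a i) e2. sgn (f y - f w) = s'" using d2(2) a by blast
  have xQ: "(\<lambda>i. w i + h a i) \<in> Qn Q n" using Qn_add[OF sf w] hd by (simp add: is_direction_def)
  show ?thesis using e1 e2 nbhd_center[OF xQ e1(1)] nbhd_center[OF xQ e2(1)] by auto
qed

lemma not_dec_const:
  assumes sf: "is_subfield Q" and y: "y \<in> Qn Q n" and hd: "is_direction Q n h"
    and r: "r > 0" and const: "\<forall>z\<in>nbhd Q n y r. f z = f y"
  shows "\<not> dir_behaviour Q n W h y f (-1)"
proof
  assume "dir_behaviour Q n W h y f (-1)"
  then obtain d where d: "d>0" "\<forall>a. 0<a \<and> a<d \<longrightarrow> (\<exists>e>0. nbhd Q n (\<lambda>i. y i + h a i) e \<subseteq> W \<and> (\<forall>z\<in>nbhd Q n (\<lambda>i. y i + h a i) e. sgn (f z - f y) = -1))"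
    unfolding dir_behaviour_def by blast
  from hd r obtain d' where d': "d'>0" "\<forall>a. \<bar>a\<bar> < d' \<longrightarrow> distn n (h a) (\<lambda>i. 0) < r"
    unfolding is_direction_def by blast
  define a where "a = min d d' / 2"
  have a: "0 < a" "a < d" "\<bar>a\<bar> < d'" using d d' by (auto simp: a_def)
  have zQ: "(\<lambda>i. y i + h a i) \<in> Qn Q n" using Qn_add[OF sf y] hd by (simp add: is_direction_def)
  have "distn n y (\<lambda>i. y i + h a i) < r" using distn_shift[of n y "h a"] d'(2) a(3) by simp
  then have "(\<lambda>i. y i + h a i) \<in> nbhd Q n y r" using zQ by (simp add: nbhd_def)
  then have fz: "f (\<lambda>i. y i + h a i) = f y" using const by blast
  obtain e where e: "e>0" "\<forall>z\<in>nbhd Q n (\<lambda>i. y i + h a i) e. sgn (f z - f y) = -1" using d(2) a by blast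
  show False using e(2) nbhd_center[OF zQ e(1)] fz by auto
qed

lemma run_eq:
  assumes "ties_ok tbw decw w p t" "ties_ok tby decy y p t"
    "\<forall>v\<in>branch_fns t. (v w < 0 \<longrightarrow> v y < 0) \<and> (v w > 0 \<longrightarrow> v y > 0) \<and>
        (v w = 0 \<longrightarrow> (decw v \<longrightarrow> v y < 0) \<and> (\<not> decw v \<longrightarrow> v y > 0 \<or> (v y = 0 \<and> \<not> decy v)))"
  shows "run tbw w p t = run tby y p t"
  using assms
proof (induction t arbitrary: p)
  case (Leaf x) then show ?case by simp
next
  case (Node v l r)
  have cv: "(v w < 0 \<longrightarrow> v y < 0) \<and> (v w > 0 \<longrightarrow> v y > 0) \<and>
        (v w = 0 \<longrightarrow> (decw v \<longrightarrow> v y < 0) \<and> (\<not> decw v \<longrightarrow> v y > 0 \<or> (v y = 0 \<and> \<not> decy v)))"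
    using Node.prems(3) by simp
  have cl: "\<forall>u\<in>branch_fns l. (u w < 0 \<longrightarrow> u y < 0) \<and> (u w > 0 \<longrightarrow> u y > 0) \<and>
        (u w = 0 \<longrightarrow> (decw u \<longrightarrow> u y < 0) \<and> (\<not> decw u \<longrightarrow> u y > 0 \<or> (u y = 0 \<and> \<not> decy u)))"
    using Node.prems(3) by simp
  have cr: "\<forall>u\<in>branch_fns r. (u w < 0 \<longrightarrow> u y < 0) \<and> (u w > 0 \<longrightarrow> u y > 0) \<and>
        (u w = 0 \<longrightarrow> (decw u \<longrightarrow> u y < 0) \<and> (\<not> decw u \<longrightarrow> u y > 0 \<or> (u y = 0 \<and> \<not> decy u)))"
    using Node.prems(3) by simp
  have tw: "ties_ok tbw decw w p (Node v l r)" and ty: "ties_ok tby decy y p (Node v l r)"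
    using Node.prems(1,2) by simp_all
  have IHl: "run tbw w (p @ [False]) l = run tby y (p @ [False]) l"
    if "ties_ok tbw decw w (p @ [False]) l" "ties_ok tby decy y (p @ [False]) l"
    using Node.IH(1)[OF that cl] .
  have IHr: "run tbw w (p @ [True]) r = run tby y (p @ [True]) r"
    if "ties_ok tbw decw w (p @ [True]) r" "ties_ok tby decy y (p @ [True]) r"
    using Node.IH(2)[OF that cr] .
  consider (a) "v w < 0" | (b) "v w > 0" | (c) "v w = 0" "decw v" | (d) "v w = 0" "\<not> decw v"
    by linarith
  then show ?case
  proof cases
    case a
    then have vy: "v y < 0" using cv by blast
    have "ties_ok tbw decw w (p @ [False]) l" using tw a by simp
    moreover have "ties_ok tby decy y (p @ [False]) l" using ty vy by simp
    ultimately show ?thesis using a vy IHl by simp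
  next
    case b
    then have vy: "v y > 0" using cv by blast
    have "ties_ok tbw decw w (p @ [True]) r" using tw b by simp
    moreover have "ties_ok tby decy y (p @ [True]) r" using ty vy by simp
    ultimately show ?thesis using b vy IHr by simp
  next
    case c
    then have vy: "v y < 0" using cv by blast
    have tp: "tbw p" using c tw by simp
    have "ties_ok tbw decw w (p @ [False]) l" using tw c tp by simp
    moreover have "ties_ok tby decy y (p @ [False]) l" using ty vy by simp
    ultimately show ?thesis using c vy tp IHl by simp
  next
    case d
    then have vy: "v y > 0 \<or> (v y = 0 \<and> \<not> decy v)" using cv by blast
    have tp: "\<not> tbw p" using d tw by simp
    have t1: "ties_ok tbw decw w (p @ [True]) r" using tw d tp by simp
    show ?thesis
    proof (cases "v y > 0")
      case True
      have "ties_ok tby decy y (p @ [True]) r" using ty True by simp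
      then show ?thesis using d True tp t1 IHr by simp
    next
      case False
      then have vy0: "v y = 0" "\<not> decy v" using vy by auto
      have tq: "\<not> tby p" using ty vy0 by simp
      have "ties_ok tby decy y (p @ [True]) r" using ty vy0 tq by simp
      then show ?thesis using d vy0 tp tq t1 IHr by simp
    qed
  qed
qed

lemma finite_branch: "finite (branch_fns t)"
  by (induction t) auto

lemma Min_close:
  assumes "finite L" "L \<noteq> {}" "\<forall>l\<in>L. \<bar>f l - g l\<bar> < (e::real)"
  shows "\<bar>Min (f ` L) - Min (g ` L)\<bar> < e"
proof -
  have "Min (f ` L) \<in> f ` L" "Min (g ` L) \<in> g ` L" using assms by simp_all
  then obtain l1 l2 where l1: "l1 \<in> L" "Min (f ` L) = f l1" and l2: "l2 \<in> L" "Min (g ` L) = g l2" by auto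
  have "f l1 \<le> f l2" using l1 l2 assms Min_le[of "f ` L" "f l2"] by auto
  moreover have "g l2 \<le> g l1" using l1 l2 assms Min_le[of "g ` L" "g l1"] by auto
  moreover have "\<bar>f l1 - g l1\<bar> < e" "\<bar>f l2 - g l2\<bar> < e" using assms l1 l2 by auto
  ultimately show ?thesis using l1 l2 by linarith
qed

lemma contQ_Min:
  assumes "finite L" "L \<noteq> {}" "\<forall>l\<in>L. contQ n W (\<lambda>w. cost w l)"
  shows "contQ n W (\<lambda>w. Min ((\<lambda>l. cost w l) ` L))"
  unfolding contQ_def
proof (intro ballI allI impI)
  fix x and e :: real assume x: "x \<in> W" and e: "e > 0"
  have "\<forall>l\<in>L. \<exists>d>0. \<forall>t. 0 < t \<and> t < d \<longrightarrow> (\<forall>y\<in>W. distn n x y < t \<longrightarrow> \<bar>cost y l - cost x l\<bar> < e)"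
  proof
    fix l assume "l \<in> L"
    then obtain d where "d>0" "\<forall>y\<in>W. distn n x y < d \<longrightarrow> \<bar>cost y l - cost x l\<bar> < e"
      using assms(3) x e unfolding contQ_def by blast
    then show "\<exists>d>0. \<forall>t. 0 < t \<and> t < d \<longrightarrow> (\<forall>y\<in>W. distn n x y < t \<longrightarrow> \<bar>cost y l - cost x l\<bar> < e)"
      by force
  qed
  from finite_min_delta[OF assms(1) this] obtain d where d: "d>0"
    "\<forall>l\<in>L. \<forall>t. 0 < t \<and> t < d \<longrightarrow> (\<forall>y\<in>W. distn n x y < t \<longrightarrow> \<bar>cost y l - cost x l\<bar> < e)" by blast
  show "\<exists>d>0. \<forall>y\<in>W. distn n x y < d \<longrightarrow> \<bar>Min ((\<lambda>l. cost y l) ` L) - Min ((\<lambda>l. cost x l) ` L)\<bar> < e"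
  proof (rule exI[of _ "d/2"], intro conjI ballI impI)
    show "d/2 > 0" using d by simp
    fix y assume y: "y \<in> W" "distn n x y < d/2"
    have dd: "0 < d/2" "d/2 < d" using d(1) by auto
    have "\<forall>l\<in>L. \<bar>cost y l - cost x l\<bar> < e"
    proof
      fix l assume "l \<in> L"
      then show "\<bar>cost y l - cost x l\<bar> < e" using d(2) dd y by blast
    qed
    then show "\<bar>Min ((\<lambda>l. cost y l) ` L) - Min ((\<lambda>l. cost x l) ` L)\<bar> < e"
      by (rule Min_close[OF assms(1,2)])
  qed
qed

lemma cont_seq:
  assumes "contQ n W f" "w \<in> W" "\<forall>k. ys k \<in> W \<and> distn n w (ys k) < 1 / real (Suc k)"
  shows "(\<lambda>k. f (ys k)) \<longlonglongrightarrow> f w"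
proof (rule LIMSEQ_I)
  fix r :: real assume r: "0 < r"
  obtain d where d: "d > 0" "\<forall>y\<in>W. distn n w y < d \<longrightarrow> \<bar>f y - f w\<bar> < r"
    using assms(1,2) r unfolding contQ_def by blast
  obtain N where N: "inverse (real (Suc N)) < d" using reals_Archimedean[OF d(1)] by blast
  have "\<forall>k\<ge>N. norm (f (ys k) - f w) < r"
  proof (intro allI impI)
    fix k assume kN: "k \<ge> N"
    have "1 / real (Suc k) \<le> 1 / real (Suc N)" using kN by (simp add: frac_le)
    moreover have "inverse (real (Suc N)) = 1 / real (Suc N)" by (simp add: inverse_eq_divide)
    moreover have "distn n w (ys k) < 1 / real (Suc k)" using assms(3) by blast
    ultimately have "distn n w (ys k) < d" using N by linarith
    then show "norm (f (ys k) - f w) < r" using d assms(3) by auto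
  qed
  then show "\<exists>N. \<forall>k\<ge>N. norm (f (ys k) - f w) < r" by blast
qed


lemma approx:
  assumes sf: "is_subfield Q" and pr: "is_problem Q P" and alg: "is_algorithm Q P T"
    and usp: "uses_symbolic_perturbation Q P T tb" and nc: "null_case Q P C"
    and SP: "S \<in> P" and Sdef: "S = (n, W, L, cost)" and w: "w \<in> W" and eps: "\<epsilon> > 0"
  shows "\<exists>y\<in>W. (S, y) \<notin> C \<and> distn n w y < \<epsilon> \<and> alg_out T tb S y = alg_out T tb S w"
proof -
  have vs: "valid_struct Q S" using pr SP by (simp add: is_problem_def)
  hence WQ: "W \<subseteq> Qn Q n" using Sdef by (simp add: valid_struct_def semi_open_def)
  have wQ: "w \<in> Qn Q n" using WQ w by auto
  define B where "B = branch_fns (T S)"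
  have fB: "finite B" unfolding B_def by (rule finite_branch)
  have alg': "\<forall>v\<in>B. contQ n W v" using alg SP Sdef by (auto simp: is_algorithm_def B_def)
  have nw: "nowhere_open Q n {w \<in> W. (S, w) \<in> C}" using nc SP Sdef by (auto simp: null_case_def)
  have uspS: "\<forall>w\<in>W. \<exists>h. is_direction Q n h \<and> continues_into Q n W h w \<and>
        (\<forall>v\<in>B. dir_behaviour Q n W h w v (-1) \<or> dir_behaviour Q n W h w v 0
                                \<or> dir_behaviour Q n W h w v 1) \<and>
        ties_ok (tb S w) (\<lambda>v. dir_behaviour Q n W h w v (-1)) w [] (T S)"
    using usp SP Sdef unfolding uses_symbolic_perturbation_def B_def by auto
  obtain h where hd: "is_direction Q n h" and ci: "continues_into Q n W h w"
    and beh: "\<forall>v\<in>B. dir_behaviour Q n W h w v (-1) \<or> dir_behaviour Q n W h w v 0 \<or> dir_behaviour Q n W h w v 1"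
    and tw: "ties_ok (tb S w) (\<lambda>v. dir_behaviour Q n W h w v (-1)) w [] (T S)"
    using uspS w by blast
  have "\<forall>v\<in>B. \<exists>s. s \<in> {-1,0,1::real} \<and> dir_behaviour Q n W h w v s" using beh by blast
  then obtain s where s: "\<forall>v\<in>B. s v \<in> {-1,0,1::real} \<and> dir_behaviour Q n W h w v (s v)"
    by (metis bchoice)
  have "\<forall>v\<in>B. \<exists>d>0. \<forall>x. 0 < x \<and> x < d \<longrightarrow> (\<forall>y\<in>W. distn n w y < x \<longrightarrow> v w = 0 \<or> \<bar>v y - v w\<bar> < \<bar>v w\<bar>)"
  proof
    fix v assume v: "v \<in> B"
    show "\<exists>d>0. \<forall>x. 0 < x \<and> x < d \<longrightarrow> (\<forall>y\<in>W. distn n w y < x \<longrightarrow> v w = 0 \<or> \<bar>v y - v w\<bar> < \<bar>v w\<bar>)"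
    proof (cases "v w = 0")
      case True then show ?thesis by (auto intro: exI[of _ 1])
    next
      case False
      then have "\<bar>v w\<bar> > 0" by simp
      with alg' v w obtain d where "d>0" "\<forall>y\<in>W. distn n w y < d \<longrightarrow> \<bar>v y - v w\<bar> < \<bar>v w\<bar>"
        unfolding contQ_def by blast
      then show ?thesis by force
    qed
  qed
  from finite_min_delta[OF fB this] obtain dc where dc: "dc > 0"
    "\<forall>v\<in>B. \<forall>x. 0 < x \<and> x < dc \<longrightarrow> (\<forall>y\<in>W. distn n w y < x \<longrightarrow> v w = 0 \<or> \<bar>v y - v w\<bar> < \<bar>v w\<bar>)" by blast
  define \<delta> where "\<delta> = min (dc/2) \<epsilon>"
  have \<delta>: "0 < \<delta>" "\<delta> < dc" "\<delta> \<le> \<epsilon>" using dc eps by (auto simp: \<delta>_def)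
  have "\<forall>v\<in>B. \<exists>d>0. \<forall>x. 0 < x \<and> x < d \<longrightarrow> (\<exists>e>0. nbhd Q n (\<lambda>i. w i + h x i) e \<subseteq> W \<and> (\<forall>y\<in>nbhd Q n (\<lambda>i. w i + h x i) e. sgn (v y - v w) = s v))"
    using s unfolding dir_behaviour_def by blast
  from finite_min_delta[OF fB this] obtain da where da: "da > 0"
    "\<forall>v\<in>B. \<forall>x. 0 < x \<and> x < da \<longrightarrow> (\<exists>e>0. nbhd Q n (\<lambda>i. w i + h x i) e \<subseteq> W \<and> (\<forall>y\<in>nbhd Q n (\<lambda>i. w i + h x i) e. sgn (v y - v w) = s v))" by blast
  obtain dW where dW: "dW > 0" "\<forall>a. 0 < a \<and> a < dW \<longrightarrow> (\<exists>e>0. nbhd Q n (\<lambda>i. w i + h a i) e \<subseteq> W)"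
    using ci unfolding continues_into_def by blast
  have "\<delta>/2 > 0" using \<delta> by simp
  then obtain dh where dh: "dh > 0" "\<forall>a. \<bar>a\<bar> < dh \<longrightarrow> distn n (h a) (\<lambda>i. 0) < \<delta>/2"
    using hd unfolding is_direction_def by blast
  define a where "a = min (min da dW) dh / 2"
  have a: "0 < a" "a < da" "a < dW" "\<bar>a\<bar> < dh" using da dW dh by (auto simp: a_def)
  define x0 where "x0 = (\<lambda>i. w i + h a i)"
  have x0Q: "x0 \<in> Qn Q n" unfolding x0_def using Qn_add[OF sf wQ] hd by (simp add: is_direction_def)
  have dx0: "distn n w x0 < \<delta>/2" unfolding x0_def using distn_shift[of n w "h a"] dh a by simp
  obtain eW where eW: "eW > 0" "nbhd Q n x0 eW \<subseteq> W" using dW(2) a unfolding x0_def by blast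
  have "\<forall>v\<in>B. \<exists>d>0. \<forall>x. 0 < x \<and> x < d \<longrightarrow> (\<forall>y\<in>nbhd Q n x0 x. sgn (v y - v w) = s v)"
  proof
    fix v assume "v \<in> B"
    then obtain e where e: "e > 0" "\<forall>y\<in>nbhd Q n x0 e. sgn (v y - v w) = s v"
      using da(2) a unfolding x0_def by blast
    show "\<exists>d>0. \<forall>x. 0 < x \<and> x < d \<longrightarrow> (\<forall>y\<in>nbhd Q n x0 x. sgn (v y - v w) = s v)"
      using e by (intro exI[of _ e]) (meson less_imp_le nbhd_mono subsetD)
  qed
  from finite_min_delta[OF fB this] obtain ee where ee: "ee > 0"
    "\<forall>v\<in>B. \<forall>x. 0 < x \<and> x < ee \<longrightarrow> (\<forall>y\<in>nbhd Q n x0 x. sgn (v y - v w) = s v)" by blast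
  define e where "e = min (min eW ee) (\<delta>/2) / 2"
  have e: "0 < e" "e \<le> eW" "e < ee" "e \<le> \<delta>/2" using eW ee \<delta> by (auto simp: e_def)
  define N where "N = nbhd Q n x0 e"
  have NW: "N \<subseteq> W" using nbhd_mono[OF e(2)] eW N_def by blast
  have Nsgn: "\<forall>v\<in>B. \<forall>y\<in>N. sgn (v y - v w) = s v" using ee(2) e unfolding N_def by blast
  have Ndist: "\<forall>y\<in>N. distn n w y < \<delta>"
  proof
    fix y assume "y \<in> N"
    then have "distn n x0 y < e" by (simp add: N_def nbhd_def)
    moreover have "distn n w y \<le> distn n w x0 + distn n x0 y" by (rule distn_tri)
    ultimately show "distn n w y < \<delta>" using dx0 e by linarith
  qed
  have x0N: "x0 \<in> N" unfolding N_def using nbhd_center[OF x0Q e(1)] .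
  have "\<not> N \<subseteq> {w \<in> W. (S, w) \<in> C}"
    using nw x0N openQ_nbhd[of Q n x0 e] unfolding nowhere_open_def N_def by blast
  then obtain y where yN: "y \<in> N" and yC: "(S, y) \<notin> C" using NW by blast
  have yW: "y \<in> W" using yN NW by blast
  have yQ: "y \<in> Qn Q n" using yW WQ by blast
  obtain hy where hyd: "is_direction Q n hy"
    and ty: "ties_ok (tb S y) (\<lambda>v. dir_behaviour Q n W hy y v (-1)) y [] (T S)"
    using uspS yW by blast
  obtain r where r: "r > 0" "nbhd Q n y r \<subseteq> N" using nbhd_inner[of y Q n x0 e] yN N_def by blast
  have dwy: "distn n w y < \<delta>" using Ndist yN by blast
  have cond: "\<forall>v\<in>B. (v w < 0 \<longrightarrow> v y < 0) \<and> (v w > 0 \<longrightarrow> v y > 0) \<and>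
        (v w = 0 \<longrightarrow> (dir_behaviour Q n W h w v (-1) \<longrightarrow> v y < 0) \<and>
          (\<not> dir_behaviour Q n W h w v (-1) \<longrightarrow> v y > 0 \<or> (v y = 0 \<and> \<not> dir_behaviour Q n W hy y v (-1))))"
  proof
    fix v assume v: "v \<in> B"
    have c1: "v w = 0 \<or> \<bar>v y - v w\<bar> < \<bar>v w\<bar>" using dc(2) v \<delta> dwy yW by blast
    have sv: "sgn (v y - v w) = s v" using Nsgn v yN by blast
    have sv3: "s v \<in> {-1,0,1}" and bs: "dir_behaviour Q n W h w v (s v)" using s v by auto
    show "(v w < 0 \<longrightarrow> v y < 0) \<and> (v w > 0 \<longrightarrow> v y > 0) \<and>
        (v w = 0 \<longrightarrow> (dir_behaviour Q n W h w v (-1) \<longrightarrow> v y < 0) \<and>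
          (\<not> dir_behaviour Q n W h w v (-1) \<longrightarrow> v y > 0 \<or> (v y = 0 \<and> \<not> dir_behaviour Q n W hy y v (-1))))"
    proof (intro conjI impI)
      assume "v w < 0" then show "v y < 0" using c1 by linarith
    next
      assume "v w > 0" then show "v y > 0" using c1 by linarith
    next
      assume "v w = 0" "dir_behaviour Q n W h w v (-1)"
      then have "s v = -1" using dir_unique[OF sf wQ hd bs] by metis
      then show "v y < 0" using sv \<open>v w = 0\<close> by (simp add: sgn_if split: if_splits)
    next
      assume z: "v w = 0" and nd: "\<not> dir_behaviour Q n W h w v (-1)"
      then have "s v \<noteq> -1" using bs by auto
      then consider "s v = 0" | "s v = 1" using sv3 by auto
      then show "v y > 0 \<or> (v y = 0 \<and> \<not> dir_behaviour Q n W hy y v (-1))"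
      proof cases
        case 2 then show ?thesis using sv z by (simp add: sgn_if split: if_splits)
      next
        case 1
        have const: "\<forall>z\<in>N. v z = 0"
        proof
          fix z assume "z \<in> N"
          then have "sgn (v z - v w) = 0" using Nsgn v 1 by simp
          then show "v z = 0" using \<open>v w = 0\<close> by (simp add: sgn_0_0)
        qed
        then have "\<forall>z\<in>nbhd Q n y r. v z = v y" using r yN by auto
        from not_dec_const[OF sf yQ hyd r(1) this] have "\<not> dir_behaviour Q n W hy y v (-1)" .
        then show ?thesis using const yN by auto
      qed
    qed
  qed
  have "run (tb S w) w [] (T S) = run (tb S y) y [] (T S)"
    using cond unfolding B_def by (rule run_eq[OF tw ty])
  then have ao: "alg_out T tb S y = alg_out T tb S w" by (simp add: alg_out_def)
  have "distn n w y < \<epsilon>" using dwy \<delta>(3) by linarith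
  then show ?thesis using yW yC ao by blast
qed

lemma seq_exists:
  assumes sf: "is_subfield Q" and pr: "is_problem Q P" and alg: "is_algorithm Q P T"
    and usp: "uses_symbolic_perturbation Q P T tb" and nc: "null_case Q P C"
    and SP: "S \<in> P" and Sdef: "S = (n, W, L, cost)" and w: "w \<in> W"
  shows "\<exists>ys. \<forall>k. ys k \<in> W \<and> (S, ys k) \<notin> C \<and> distn n w (ys k) < 1 / real (Suc k) \<and> alg_out T tb S (ys k) = alg_out T tb S w"
proof -
  have "\<forall>k. \<exists>y. y \<in> W \<and> (S, y) \<notin> C \<and> distn n w y < 1 / real (Suc k) \<and> alg_out T tb S y = alg_out T tb S w"
  proof
    fix k :: nat
    have "1 / real (Suc k) > 0" by simp
    from approx[OF sf pr alg usp nc SP Sdef w this] show "\<exists>y. y \<in> W \<and> (S, y) \<notin> C \<and> distn n w y < 1 / real (Suc k) \<and> alg_out T tb S y = alg_out T tb S w"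
      by blast
  qed
  then show ?thesis by (rule choice)
qed

lemma struct_facts:
  assumes pr: "is_problem Q P" and SP: "S \<in> P" and Sdef: "S = (n, W, L, cost)"
  shows "finite L" "L \<noteq> {}" "\<forall>l\<in>L. contQ n W (\<lambda>w. cost w l)"
    "contQ n W (OPT S)"
proof -
  have vs: "valid_struct Q S" using pr SP by (simp add: is_problem_def)
  then show fL: "finite L" and ne: "L \<noteq> {}" and cc: "\<forall>l\<in>L. contQ n W (\<lambda>w. cost w l)"
    using Sdef by (auto simp: valid_struct_def)
  have "OPT S = (\<lambda>w. Min ((\<lambda>l. cost w l) ` L))" by (rule ext) (simp add: OPT_def Sdef)
  then show "contQ n W (OPT S)" using contQ_Min[OF fL ne cc] by simp
qed

lemma partD:
  assumes sf: "is_subfield Q" and pr: "is_problem Q P" and alg: "is_algorithm Q P T"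
    and usp: "uses_symbolic_perturbation Q P T tb" and nc: "null_case Q P C"
  shows "(\<forall>S\<in>P. \<forall>w\<in>fst (snd S). (S, w) \<notin> C \<longrightarrow>
         (\<exists>l. alg_out T tb S w = Some l \<and> l \<in> fst (snd (snd S)) \<and> snd (snd (snd S)) w l = OPT S w))
      \<longrightarrow> (\<forall>S\<in>P. \<forall>w\<in>fst (snd S).
         (\<exists>l. alg_out T tb S w = Some l \<and> l \<in> fst (snd (snd S)) \<and> snd (snd (snd S)) w l = OPT S w))"
proof (intro impI ballI)
  fix S w
  assume H: "\<forall>S\<in>P. \<forall>w\<in>fst (snd S). (S, w) \<notin> C \<longrightarrow>
         (\<exists>l. alg_out T tb S w = Some l \<and> l \<in> fst (snd (snd S)) \<and> snd (snd (snd S)) w l = OPT S w)"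
    and SP: "S \<in> P" and w: "w \<in> fst (snd S)"
  obtain n W L cost where Sd: "S = (n, W, L, cost)" by (cases S)
  have wW: "w \<in> W" using w Sd by simp
  note sfacts = struct_facts[OF pr SP Sd]
  from seq_exists[OF sf pr alg usp nc SP Sd wW] obtain ys where
    ys: "\<forall>k. ys k \<in> W \<and> (S, ys k) \<notin> C \<and> distn n w (ys k) < 1 / real (Suc k) \<and> alg_out T tb S (ys k) = alg_out T tb S w"
    by blast
  have H': "\<forall>k. \<exists>l. alg_out T tb S w = Some l \<and> l \<in> L \<and> cost (ys k) l = OPT S (ys k)"
    using H SP ys Sd by fastforce
  then obtain l where l: "alg_out T tb S w = Some l" "l \<in> L" by blast
  have eq: "\<forall>k. cost (ys k) l = OPT S (ys k)" using H' l by auto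
  have ys': "\<forall>k. ys k \<in> W \<and> distn n w (ys k) < 1 / real (Suc k)" using ys by blast
  have t1: "(\<lambda>k. cost (ys k) l) \<longlonglongrightarrow> cost w l"
    using cont_seq[OF _ wW ys', of "\<lambda>w. cost w l"] sfacts(3) l(2) by blast
  have t2: "(\<lambda>k. OPT S (ys k)) \<longlonglongrightarrow> OPT S w"
    using cont_seq[OF sfacts(4) wW ys'] .
  have "cost w l = OPT S w" using t1 t2 eq LIMSEQ_unique by auto
  then show "\<exists>l. alg_out T tb S w = Some l \<and> l \<in> fst (snd (snd S)) \<and> snd (snd (snd S)) w l = OPT S w"
    using l Sd by auto
qed

lemma partE:
  assumes sf: "is_subfield Q" and pr: "is_problem Q P" and alg: "is_algorithm Q P T"
    and usp: "uses_symbolic_perturbation Q P T tb" and nc: "null_case Q P C"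
  shows "(\<forall>c :: 'l struct \<Rightarrow> vec \<Rightarrow> real.
        (\<forall>S\<in>P. contQ (fst S) (fst (snd S)) (c S)) \<longrightarrow>
        (\<forall>S\<in>P. \<forall>w\<in>fst (snd S). (S, w) \<notin> C \<longrightarrow>
           (\<exists>l. alg_out T tb S w = Some l \<and> l \<in> fst (snd (snd S)) \<and> snd (snd (snd S)) w l \<le> c S w * OPT S w))
        \<longrightarrow> (\<forall>S\<in>P. \<forall>w\<in>fst (snd S).
           (\<exists>l. alg_out T tb S w = Some l \<and> l \<in> fst (snd (snd S)) \<and> snd (snd (snd S)) w l \<le> c S w * OPT S w)))"
proof (intro allI impI ballI)
  fix c :: "'l struct \<Rightarrow> vec \<Rightarrow> real" and S w
  assume cc: "\<forall>S\<in>P. contQ (fst S) (fst (snd S)) (c S)"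
    and H: "\<forall>S\<in>P. \<forall>w\<in>fst (snd S). (S, w) \<notin> C \<longrightarrow>
           (\<exists>l. alg_out T tb S w = Some l \<and> l \<in> fst (snd (snd S)) \<and> snd (snd (snd S)) w l \<le> c S w * OPT S w)"
    and SP: "S \<in> P" and w: "w \<in> fst (snd S)"
  obtain n W L cost where Sd: "S = (n, W, L, cost)" by (cases S)
  have wW: "w \<in> W" using w Sd by simp
  have ccS: "contQ n W (c S)" using cc SP Sd by force
  note sfacts = struct_facts[OF pr SP Sd]
  from seq_exists[OF sf pr alg usp nc SP Sd wW] obtain ys where
    ys: "\<forall>k. ys k \<in> W \<and> (S, ys k) \<notin> C \<and> distn n w (ys k) < 1 / real (Suc k) \<and> alg_out T tb S (ys k) = alg_out T tb S w"
    by blast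
  have H': "\<forall>k. \<exists>l. alg_out T tb S w = Some l \<and> l \<in> L \<and> cost (ys k) l \<le> c S (ys k) * OPT S (ys k)"
    using H SP ys Sd by fastforce
  then obtain l where l: "alg_out T tb S w = Some l" "l \<in> L" by blast
  have le: "\<forall>k. cost (ys k) l \<le> c S (ys k) * OPT S (ys k)" using H' l by auto
  have ys': "\<forall>k. ys k \<in> W \<and> distn n w (ys k) < 1 / real (Suc k)" using ys by blast
  have t1: "(\<lambda>k. cost (ys k) l) \<longlonglongrightarrow> cost w l"
    using cont_seq[OF _ wW ys', of "\<lambda>w. cost w l"] sfacts(3) l(2) by blast
  have t2: "(\<lambda>k. OPT S (ys k)) \<longlonglongrightarrow> OPT S w"
    using cont_seq[OF sfacts(4) wW ys'] .
  have t3: "(\<lambda>k. c S (ys k)) \<longlonglongrightarrow> c S w"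
    using cont_seq[OF ccS wW ys'] .
  have "cost w l \<le> c S w * OPT S w"
    by (rule LIMSEQ_le[OF t1 tendsto_mult[OF t3 t2]]) (use le in blast)
  then show "\<exists>l. alg_out T tb S w = Some l \<and> l \<in> fst (snd (snd S)) \<and> snd (snd (snd S)) w l \<le> c S w * OPT S w"
    using l Sd by auto
qed


theorem corollary1:
  fixes Q :: "real set" and P :: "'l struct set"
    and T :: "'l struct \<Rightarrow> 'l dtree" and tb :: "'l struct \<Rightarrow> vec \<Rightarrow> bool list \<Rightarrow> bool"
    and C :: "('l struct \<times> vec) set"
  assumes "is_subfield Q"
    and "is_problem Q P"
    and "is_algorithm Q P T"
    and "uses_symbolic_perturbation Q P T tb"
    and "null_case Q P C"
  shows
    "((\<forall>S\<in>P. \<forall>w\<in>fst (snd S). (S, w) \<notin> C \<longrightarrow>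
         (\<exists>l. alg_out T tb S w = Some l \<and> l \<in> fst (snd (snd S)) \<and> snd (snd (snd S)) w l = OPT S w))
      \<longrightarrow> (\<forall>S\<in>P. \<forall>w\<in>fst (snd S).
         (\<exists>l. alg_out T tb S w = Some l \<and> l \<in> fst (snd (snd S)) \<and> snd (snd (snd S)) w l = OPT S w)))
     \<and>
     (\<forall>c :: 'l struct \<Rightarrow> vec \<Rightarrow> real.
        (\<forall>S\<in>P. contQ (fst S) (fst (snd S)) (c S)) \<longrightarrow>
        (\<forall>S\<in>P. \<forall>w\<in>fst (snd S). (S, w) \<notin> C \<longrightarrow>
           (\<exists>l. alg_out T tb S w = Some l \<and> l \<in> fst (snd (snd S)) \<and> snd (snd (snd S)) w l \<le> c S w * OPT S w))
        \<longrightarrow> (\<forall>S\<in>P. \<forall>w\<in>fst (snd S).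
           (\<exists>l. alg_out T tb S w = Some l \<and> l \<in> fst (snd (snd S)) \<and> snd (snd (snd S)) w l \<le> c S w * OPT S w)))"
  using partD[OF assms] partE[OF assms] by blast

end
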